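(* Let $n>2k$, let $q\ge nk$ be a prime power and $\gamma$ a primitive element of $\mathbb F_q$. Let $\mathcal C\subseteq\mathbb F_q^{n-k-1}$ be the code $\{\boldsymbol c: \sum_{p=1}^{n-k-1}\gamma^{(p-1)u}c_p=0\ \text{for } u=0,\dots,k-2\}$ (so $|\mathcal C|=q^{n-2k}$), and enumerate its codewords as $\boldsymbol c_1,\dots,\boldsymbol c_{q^{n-2k}}$. For each $i$ let $S_i\subseteq\mathbb F_q^n$ be the span of $\boldsymbol v_{i,1},\dots,\boldsymbol v_{i,k}$, where $\boldsymbol v_{i,t}=(\boldsymbol e_t,\ \Gamma_t(\boldsymbol c_i),\ h_t(\boldsymbol c_i))$ with $\boldsymbol e_t\in\mathbb F_q^k$ the $t$-th unit vector, $\Gamma_t(\boldsymbol x)=(\gamma^{t-1}x_1,\gamma^{2(t-1)}x_2,\dots,\gamma^{(n-k-1)(t-1)}x_{n-k-1})$, and $h_t(\boldsymbol x)=\sum_{p=1}^{n-k-1}x_p^{(t-1)(n-k-1)+p+1}$. Then $\mathcal F_{n,k}=\{S_1,\dots,S_{q^{n-2k}}\}$ consists of $k$-dimensional subspaces with pairwise trivial intersection. Moreover, $\mathcal F_{n,1}$ is an $[n,1,n-1]_q$-AAD family and $\mathcal F_{n,2}$ is an $[n,2,1+2(n-2)(2n-6)]_q$-AAD family.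
   Context: An $[n,k,L]_q$-AAD family is a family $\mathcal F$ of $k$-dimensional subspaces of $\mathbb F_q^n$ ($n>2k$) with pairwise trivial intersections such that for every $S\in\mathcal F$ and $\boldsymbol u\in\mathbb F_q^n\setminus S$, the affine space $\boldsymbol u+S$ intersects at most $L$ members of $\mathcal F$. For $k=1$ the code $\mathcal C$ is all of $\mathbb F_q^{n-2}$. *)

theory Defs
  imports Main
begin

text \<open>Vectors of F_q^n are modelled as functions nat => 'a that vanish outside
  the index range {0..<n} (coordinate j corresponds to the paper's coordinate j+1).\<close>

definition vecs :: "nat \<Rightarrow> (nat \<Rightarrow> 'a::zero) set" where
  "vecs n = {v. \<forall>j\<ge>n. v j = 0}"

definition zvec :: "nat \<Rightarrow> 'a::zero" where
  "zvec = (\<lambda>_. 0)"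

definition lspan :: "(nat \<Rightarrow> 'a::field) list \<Rightarrow> (nat \<Rightarrow> 'a) set" where
  "lspan vs = {(\<lambda>j. \<Sum>t<length vs. a t * (vs ! t) j) | a. True}"

definition lin_indep :: "(nat \<Rightarrow> 'a::field) list \<Rightarrow> bool" where
  "lin_indep vs \<longleftrightarrow> (\<forall>a. (\<lambda>j. \<Sum>t<length vs. a t * (vs ! t) j) = zvec
                         \<longrightarrow> (\<forall>t<length vs. a t = 0))"

definition kdim_subspace :: "nat \<Rightarrow> nat \<Rightarrow> (nat \<Rightarrow> 'a::field) set \<Rightarrow> bool" where
  "kdim_subspace n k S \<longleftrightarrow>
     (\<exists>B. length B = k \<and> set B \<subseteq> vecs n \<and> lin_indep B \<and> lspan B = S)"

definition affine_translate :: "(nat \<Rightarrow> 'a::plus) \<Rightarrow> (nat \<Rightarrow> 'a) set \<Rightarrow> (nat \<Rightarrow> 'a) set" where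
  "affine_translate u S = {(\<lambda>j. u j + s j) | s. s \<in> S}"

text \<open>[n,k,L]_q-AAD family (q = CARD('a)).\<close>
definition AAD :: "nat \<Rightarrow> nat \<Rightarrow> nat \<Rightarrow> (nat \<Rightarrow> 'a::field) set set \<Rightarrow> bool" where
  "AAD n k L F \<longleftrightarrow>
     n > 2 * k \<and>
     (\<forall>S\<in>F. kdim_subspace n k S) \<and>
     (\<forall>S\<in>F. \<forall>T\<in>F. S \<noteq> T \<longrightarrow> S \<inter> T = {zvec}) \<and>
     (\<forall>S\<in>F. \<forall>u\<in>vecs n - S.
        card {T\<in>F. affine_translate u S \<inter> T \<noteq> {}} \<le> L)"

definition primitive_element :: "'a::field \<Rightarrow> bool" where
  "primitive_element g \<longleftrightarrow> g \<noteq> 0 \<and> (\<forall>x. x \<noteq> 0 \<longrightarrow> (\<exists>i::nat. g ^ i = x))"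

text \<open>The code C in F_q^{n-k-1}: indices p = 0..<n-k-1 (paper's p+1),
  constraints u = 0..k-2.\<close>
definition code :: "nat \<Rightarrow> nat \<Rightarrow> 'a::field \<Rightarrow> (nat \<Rightarrow> 'a) set" where
  "code n k g = {c \<in> vecs (n - k - 1).
      \<forall>u. u + 2 \<le> k \<longrightarrow> (\<Sum>p<n - k - 1. g ^ (p * u) * c p) = 0}"

text \<open>The vector v_{c,t} for t = 0..<k (paper's t+1):
  (e_t, Gamma_t(c), h_t(c)) in F^n, with m = n-k-1.\<close>
definition vgen :: "nat \<Rightarrow> nat \<Rightarrow> 'a::field \<Rightarrow> (nat \<Rightarrow> 'a) \<Rightarrow> nat \<Rightarrow> (nat \<Rightarrow> 'a)" where
  "vgen n k g c t = (\<lambda>j.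
     if j < k then (if j = t then 1 else 0)
     else if j < n - 1 then g ^ ((j - k + 1) * t) * c (j - k)
     else if j = n - 1 then (\<Sum>p<n - k - 1. c p ^ (t * (n - k - 1) + p + 2))
     else 0)"

definition Ssub :: "nat \<Rightarrow> nat \<Rightarrow> 'a::field \<Rightarrow> (nat \<Rightarrow> 'a) \<Rightarrow> (nat \<Rightarrow> 'a) set" where
  "Ssub n k g c = lspan (map (vgen n k g c) [0..<k])"

definition Ffam :: "nat \<Rightarrow> nat \<Rightarrow> 'a::field \<Rightarrow> (nat \<Rightarrow> 'a) set set" where
  "Ffam n k g = Ssub n k g ` code n k g"

end

theory Submission
  imports Defs "HOL-Computational_Algebra.Polynomial"
begin

lemma prim_pow_inj:
  fixes g :: "'a::{finite,field}"
  assumes pr: "primitive_element g" and ij: "i < card (UNIV::'a set) - 1" "j < card (UNIV::'a set) - 1"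
    and eq: "g^i = g^j"
  shows "i = j"
proof (rule ccontr)
  assume ne: "i \<noteq> j"
  have g0: "g \<noteq> 0" using pr by (simp add: primitive_element_def)
  have main: "\<And>i j. i < j \<Longrightarrow> j < card (UNIV::'a set) - 1 \<Longrightarrow> g^i = g^j \<Longrightarrow> False"
  proof -
    fix i j assume ij: "i < j" "j < card (UNIV::'a set) - 1" "g^i = g^j"
    define e where "e = j - i"
    have e0: "e > 0" using ij by (simp add: e_def)
    have "i + e = j" using ij by (simp add: e_def)
    hence "g^j = g^i * g^e" by (metis power_add)
    hence ge: "g^e = 1" using ij g0 by simp
    have per: "g^l = g^(l mod e)" for l
    proof -
      have "g^l = (g^e)^(l div e) * g^(l mod e)"
        by (metis div_mult_mod_eq power_add power_mult mult.commute)
      thus ?thesis using ge by simp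
    qed
    have sub: "UNIV - {0::'a} \<subseteq> (\<lambda>l. g^l) ` {..<e}"
    proof
      fix x :: 'a assume "x \<in> UNIV - {0}"
      then obtain l where "g^l = x" using pr by (auto simp: primitive_element_def)
      hence "x = g^(l mod e)" using per by simp
      moreover have "l mod e < e" using e0 by simp
      ultimately show "x \<in> (\<lambda>l. g^l) ` {..<e}" by blast
    qed
    have "card (UNIV - {0::'a}) \<le> card ((\<lambda>l. g^l) ` {..<e})" by (rule card_mono[OF _ sub]) auto
    also have "\<dots> \<le> e" using card_image_le[of "{..<e}" "\<lambda>l. g^l"] by simp
    finally have "card (UNIV::'a set) - 1 \<le> e" by (simp add: card_Diff_singleton)
    thus False using ij e_def by simp
  qed
  show False
  proof (cases "i < j")
    case True thus ?thesis using main ij eq by blast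
  next
    case False hence "j < i" using ne by simp
    thus ?thesis using main ij eq by metis
  qed
qed

lemma coeff_lin_pow:
  fixes a b :: "'a::comm_ring_1"
  assumes "N \<ge> 1" "e \<le> N \<or> b = 0"
  shows "coeff ([:a,b:]^e) N = (if N = e then b^e else 0)"
proof -
  have deg: "degree ([:a,b:]^e) \<le> e"
    using degree_power_le[of "[:a,b:]" e] by (simp add: order_trans)
  have top: "coeff ([:a,b:]^e) e = b^e" for e
  proof (induction e)
    case 0 thus ?case by simp
  next
    case (Suc e)
    have dg: "degree ([:a,b:]^e) \<le> e"
      using degree_power_le[of "[:a,b:]" e] by (simp add: order_trans)
    have "coeff ([:a,b:]^Suc e) (Suc e) = a * coeff ([:a,b:]^e) (Suc e) + b * coeff ([:a,b:]^e) e"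
      by (simp add: mult_pCons_left)
    also have "coeff ([:a,b:]^e) (Suc e) = 0" using dg by (simp add: coeff_eq_0)
    finally show ?case using Suc by simp
  qed
  show ?thesis
  proof (cases "b = 0")
    case True
    have "[:a,b:]^e = [:a^e:]" using True by (induction e) auto
    thus ?thesis using assms True by (cases N) (auto simp: power_0_left)
  next
    case False
    hence "e \<le> N" using assms by simp
    thus ?thesis using top deg by (auto simp: coeff_eq_0)
  qed
qed

lemma root_bound:
  fixes c E :: "nat \<Rightarrow> 'a::field" and \<rho> \<sigma> z :: 'a
  assumes "p0 < m" "E p0 \<noteq> 0" "\<rho> \<noteq> 0 \<or> \<sigma> \<noteq> 0"
  shows "card {t. (\<Sum>p<m. \<rho>*((c p + t*E p)^(p+2) - c p^(p+2)) + \<sigma>*((c p + t*E p)^(m+p+2) - c p^(m+p+2))) = z*t}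
          \<le> (if \<sigma> = 0 then m+1 else 2*m+1)"
proof -
  define Q where "Q = (\<Sum>p<m. smult \<rho> ([:c p, E p:]^(p+2) - [:c p^(p+2):])
        + smult \<sigma> ([:c p, E p:]^(m+p+2) - [:c p^(m+p+2):])) - [:0, z:]"
  have pQ: "poly Q t = (\<Sum>p<m. \<rho>*((c p + t*E p)^(p+2) - c p^(p+2)) + \<sigma>*((c p + t*E p)^(m+p+2) - c p^(m+p+2))) - z*t" for t
    by (simp add: Q_def poly_sum mult.commute del: power_Suc)
  have set_eq: "{t. (\<Sum>p<m. \<rho>*((c p + t*E p)^(p+2) - c p^(p+2)) + \<sigma>*((c p + t*E p)^(m+p+2) - c p^(m+p+2))) = z*t}
      = {t. poly Q t = 0}" by (simp add: pQ)
  define B where "B = (if \<sigma> = 0 then m+1 else 2*m+1)"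
  have degQ: "degree Q \<le> B"
  proof -
    have d1: "degree ([:a, b:]^e) \<le> e" for a b :: 'a and e
      using degree_power_le[of "[:a,b:]" e] by (simp add: order_trans)
    have "degree (smult \<rho> ([:c p, E p:]^(p+2) - [:c p^(p+2):])
        + smult \<sigma> ([:c p, E p:]^(m+p+2) - [:c p^(m+p+2):])) \<le> B" if "p < m" for p
    proof -
      have "degree (smult \<rho> ([:c p, E p:]^(p+2) - [:c p^(p+2):])) \<le> B"
        using degree_smult_le[of \<rho> "[:c p, E p:]^(p+2) - [:c p^(p+2):]"]
          degree_diff_le[OF d1[of "c p" "E p" "p+2"], of "[:c p^(p+2):]"] that
        by (auto simp: B_def)
      moreover have "degree (smult \<sigma> ([:c p, E p:]^(m+p+2) - [:c p^(m+p+2):])) \<le> B"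
      proof (cases "\<sigma> = 0")
        case True thus ?thesis by simp
      next
        case False thus ?thesis
          using degree_smult_le[of \<sigma> "[:c p, E p:]^(m+p+2) - [:c p^(m+p+2):]"]
            degree_diff_le[OF d1[of "c p" "E p" "m+p+2"], of "[:c p^(m+p+2):]"] that
          by (auto simp: B_def)
      qed
      ultimately show ?thesis by (rule degree_add_le)
    qed
    hence "degree (\<Sum>p<m. smult \<rho> ([:c p, E p:]^(p+2) - [:c p^(p+2):])
        + smult \<sigma> ([:c p, E p:]^(m+p+2) - [:c p^(m+p+2):])) \<le> B"
      by (intro degree_sum_le) auto
    moreover have "degree [:0, z:] \<le> B" by (simp add: B_def)
    ultimately show ?thesis unfolding Q_def by (rule degree_diff_le)
  qed
  define P where "P = {p. p < m \<and> E p \<noteq> 0}"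
  have Pfin: "finite P" "P \<noteq> {}" using assms unfolding P_def by auto
  define p1 where "p1 = Max P"
  have p1: "p1 < m" "E p1 \<noteq> 0" using Max_in[OF Pfin] unfolding p1_def P_def by auto
  have p1max: "E p = 0" if "p < m" "p1 < p" for p
    using Max_ge[OF Pfin(1), of p] that unfolding p1_def P_def by fastforce
  define N where "N = (if \<sigma> = 0 then p1+2 else m+p1+2)"
  define X where "X = (if \<sigma> = 0 then \<rho> * E p1^(p1+2) else \<sigma> * E p1^(m+p1+2))"
  have N1: "N \<ge> 2" by (simp add: N_def)
  have cconst: "coeff [:x:] N = 0" for x :: 'a using N1 by (cases N) auto
  have trm: "coeff (smult \<rho> ([:c p, E p:]^(p+2) - [:c p^(p+2):])
        + smult \<sigma> ([:c p, E p:]^(m+p+2) - [:c p^(m+p+2):])) N = (if p = p1 then X else 0)"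
    if "p < m" for p
  proof -
    have "coeff (smult \<rho> ([:c p, E p:]^(p+2) - [:c p^(p+2):])
        + smult \<sigma> ([:c p, E p:]^(m+p+2) - [:c p^(m+p+2):])) N
      = \<rho> * coeff ([:c p, E p:]^(p+2)) N + \<sigma> * coeff ([:c p, E p:]^(m+p+2)) N"
      by (simp add: cconst)
    also have "\<dots> = (if p = p1 then X else 0)"
    proof (cases "\<sigma> = 0")
      case True
      have "coeff ([:c p, E p:]^(p+2)) N = (if N = p+2 then E p^(p+2) else 0)"
      proof (rule coeff_lin_pow)
        show "1 \<le> N" using N1 by simp
        show "p + 2 \<le> N \<or> E p = 0" using True p1max[of p] that by (cases "p1 < p") (auto simp: N_def)
      qed
      thus ?thesis using True by (auto simp: N_def X_def)
    next
      case False
      have "coeff ([:c p, E p:]^(p+2)) N = (if N = p+2 then E p^(p+2) else 0)"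
      proof (rule coeff_lin_pow)
        show "1 \<le> N" using N1 by simp
        show "p + 2 \<le> N \<or> E p = 0" using False that by (auto simp: N_def)
      qed
      moreover have "coeff ([:c p, E p:]^(m+p+2)) N = (if N = m+p+2 then E p^(m+p+2) else 0)"
      proof (rule coeff_lin_pow)
        show "1 \<le> N" using N1 by simp
        have "p \<le> p1 \<or> E p = 0" using p1max[of p] that by force
        thus "m + p + 2 \<le> N \<or> E p = 0" using False by (auto simp: N_def)
      qed
      ultimately show ?thesis using False that p1 by (auto simp: N_def X_def)
    qed
    finally show ?thesis .
  qed
  have "coeff Q N = (\<Sum>p<m. if p = p1 then X else 0)"
  proof -
    have "coeff [:0, z:] N = 0" using N1 by (cases N; cases "N - 1") auto
    hence "coeff Q N = (\<Sum>p<m. coeff (smult \<rho> ([:c p, E p:]^(p+2) - [:c p^(p+2):])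
        + smult \<sigma> ([:c p, E p:]^(m+p+2) - [:c p^(m+p+2):])) N)"
      unfolding Q_def coeff_diff coeff_sum by simp
    also have "\<dots> = (\<Sum>p<m. if p = p1 then X else 0)"
      by (rule sum.cong[OF refl], rule trm, simp)
    finally show ?thesis .
  qed
  also have "\<dots> = X" using p1 by simp
  finally have "coeff Q N \<noteq> 0" using p1 assms(3) by (auto simp: X_def)
  hence "Q \<noteq> 0" by auto
  from card_poly_roots_bound[OF this] degQ show ?thesis unfolding set_eq B_def by simp
qed

lemma lspan_map: "lspan (map f [0..<k]) = {(\<lambda>j. \<Sum>t<k. a t * f t j) | a. True}"
proof -
  have "(\<lambda>j. \<Sum>t<length (map f [0..<k]). a t * (map f [0..<k] ! t) j) = (\<lambda>j. \<Sum>t<k. a t * f t j)" for a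
    by (auto intro!: sum.cong)
  thus ?thesis unfolding lspan_def by simp
qed

lemma vgen_low: "j < k \<Longrightarrow> vgen n k g c t j = (if j = t then 1 else 0)"
  by (simp add: vgen_def)

lemma vgen_mid: "p < n - k - 1 \<Longrightarrow> vgen n k g c t (k + p) = g^((p+1)*t) * c p"
  by (simp add: vgen_def)

lemma vgen_last: "k < n \<Longrightarrow> vgen n k g c t (n - 1) = (\<Sum>p<n - k - 1. c p ^ (t * (n - k - 1) + p + 2))"
  by (simp add: vgen_def)

lemma sum_low: assumes "j < k" shows "(\<Sum>t<k. a t * vgen n k g c t j) = a j"
proof -
  have "(\<Sum>t<k. a t * vgen n k g c t j) = (\<Sum>t<k. if t = j then a j else 0)"
    by (rule sum.cong) (auto simp: vgen_low assms)
  thus ?thesis using assms by simp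
qed

lemma kdim:
  assumes "n > 2*k"
  shows "kdim_subspace n k (Ssub n k g c)"
  unfolding kdim_subspace_def
proof (intro exI conjI)
  let ?B = "map (vgen n k g c) [0..<k]"
  show "length ?B = k" by simp
  show "set ?B \<subseteq> vecs n" using assms by (auto simp: vecs_def vgen_def)
  show "lspan ?B = Ssub n k g c" by (simp add: Ssub_def)
  show "lin_indep ?B" unfolding lin_indep_def
  proof (intro allI impI)
    fix a t assume h: "(\<lambda>j. \<Sum>t<length ?B. a t * (?B ! t) j) = zvec" and t: "t < length ?B"
    have "(\<Sum>t'<k. a t' * (?B ! t') t) = 0" using fun_cong[OF h, of t] by (simp add: zvec_def)
    also have "(\<Sum>t'<k. a t' * (?B ! t') t) = (\<Sum>t'<k. a t' * vgen n k g c t' t)" by (rule sum.cong) auto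
    also have "\<dots> = a t" using t by (simp add: sum_low)
    finally show "a t = 0" .
  qed
qed

lemma code_vecs: "c \<in> code n k g \<Longrightarrow> c \<in> vecs (n - k - 1)" by (simp add: code_def)

lemma trivial_int:
  fixes g :: "'a::{finite,field}"
  assumes nk: "n > 2*k" and q: "card (UNIV :: 'a set) \<ge> n * k" and pr: "primitive_element g"
    and cc: "c \<in> code n k g" "c' \<in> code n k g" "c \<noteq> c'"
  shows "Ssub n k g c \<inter> Ssub n k g c' = {zvec}"
proof -
  define m where "m = n - k - 1"
  define q where "q = card (UNIV :: 'a set)"
  have key: "\<forall>t<k. a t = 0" if eq: "(\<lambda>j. \<Sum>t<k. a t * vgen n k g c t j) = (\<lambda>j. \<Sum>t<k. b t * vgen n k g c' t j)" for a b
  proof (rule ccontr)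
    assume "\<not> (\<forall>t<k. a t = 0)"
    then obtain t0 where t0: "t0 < k" "a t0 \<noteq> 0" by auto
    have ab: "a j = b j" if "j < k" for j using fun_cong[OF eq, of j] that by (simp add: sum_low)
    define P where "P = (\<Sum>t<k. monom (a t) t)"
    have pP: "poly P y = (\<Sum>t<k. a t * y^t)" for y by (simp add: P_def poly_sum poly_monom)
    have "coeff P t0 = a t0" using t0 by (simp add: P_def coeff_sum)
    hence P0: "P \<noteq> 0" using t0 by auto
    have dP: "degree P \<le> k - 1" unfolding P_def
      by (rule degree_sum_le) (auto intro: order_trans[OF degree_monom_le])
    have qm: "m < q - 1"
    proof -
      have "n \<le> n * k" using t0 by simp
      thus ?thesis using t0 q nk unfolding m_def q_def by linarith
    qed
    have inj: "i = j" if "i \<le> m" "j \<le> m" "g^i = g^j" for i j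
      using prim_pow_inj[OF pr, of i j] that qm unfolding q_def by linarith
    define d where "d p = c p - c' p" for p
    have mid: "poly P (g^(p+1)) * d p = 0" if "p < m" for p
    proof -
      have "(\<Sum>t<k. a t * vgen n k g c t (k+p)) = (\<Sum>t<k. b t * vgen n k g c' t (k+p))"
        using fun_cong[OF eq, of "k+p"] by simp
      hence "(\<Sum>t<k. a t * (g^((p+1)*t) * c p)) = (\<Sum>t<k. a t * (g^((p+1)*t) * c' p))"
        using that ab unfolding m_def by (simp add: vgen_mid)
      hence "(\<Sum>t<k. a t * ((g^(p+1))^t * c p)) = (\<Sum>t<k. a t * ((g^(p+1))^t * c' p))"
        by (simp only: power_mult)
      hence "(\<Sum>t<k. a t * (g^(p+1))^t) * c p = (\<Sum>t<k. a t * (g^(p+1))^t) * c' p"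
        by (simp only: sum_distrib_right mult.assoc)
      thus ?thesis by (simp add: pP d_def algebra_simps)
    qed
    define R where "R = {p. p < m \<and> d p \<noteq> 0}"
    have Rfin: "finite R" by (simp add: R_def)
    have "\<exists>p. c p \<noteq> c' p" using cc(3) by auto
    then obtain p0 where cp0: "c p0 \<noteq> c' p0" by blast
    have zer: "c p = 0 \<and> c' p = 0" if "p \<ge> m" for p
      using code_vecs[OF cc(1)] code_vecs[OF cc(2)] that by (simp add: vecs_def m_def)
    have "p0 < m" using cp0 zer[of p0] by (cases "p0 < m") auto
    hence p0: "p0 \<in> R" using cp0 by (simp add: R_def d_def)
    have "(\<lambda>p. g^(p+1)) ` R \<subseteq> {y. poly P y = 0}" using mid by (auto simp: R_def)
    moreover have "inj_on (\<lambda>p. g^(p+1)) R"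
    proof (rule inj_onI)
      fix x y assume "x \<in> R" "y \<in> R" "g^(x+1) = g^(y+1)"
      thus "x = y" using inj[of "x+1" "y+1"] by (simp add: R_def)
    qed
    ultimately have "card R \<le> card {y. poly P y = 0}"
      using card_inj_on_le poly_roots_finite[OF P0] by blast
    also have "\<dots> \<le> degree P" by (rule card_poly_roots_bound[OF P0])
    finally have cR: "card R \<le> k - 1" using dP by simp
    define L where "L = (\<Prod>p\<in>R-{p0}. [:-(g^p), 1:])"
    have dL: "degree L \<le> card R - 1"
    proof -
      have "degree L \<le> sum (degree \<circ> (\<lambda>p. [:-(g^p), 1:])) (R-{p0})"
        unfolding L_def by (rule degree_prod_sum_le) (simp add: Rfin)
      also have "\<dots> = card (R - {p0})" by simp
      finally show ?thesis using p0 Rfin by simp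
    qed
    have code0: "(\<Sum>p<m. g^(p*u) * d p) = 0" if "u + 2 \<le> k" for u
    proof -
      have "(\<Sum>p<m. g^(p*u) * c p) = 0" "(\<Sum>p<m. g^(p*u) * c' p) = 0"
        using cc that by (auto simp: code_def m_def)
      thus ?thesis by (simp add: d_def right_diff_distrib sum_subtractf)
    qed
    have "(\<Sum>p<m. poly L (g^p) * d p) = (\<Sum>p<m. (\<Sum>i\<le>degree L. coeff L i * (g^p)^i) * d p)"
      by (simp add: poly_altdef)
    also have "\<dots> = (\<Sum>p<m. \<Sum>i\<le>degree L. coeff L i * (g^(p*i) * d p))"
      by (simp only: sum_distrib_right power_mult mult.assoc)
    also have "\<dots> = (\<Sum>i\<le>degree L. \<Sum>p<m. coeff L i * (g^(p*i) * d p))"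
      by (rule sum.swap)
    also have "\<dots> = (\<Sum>i\<le>degree L. coeff L i * (\<Sum>p<m. g^(p*i) * d p))"
      by (simp only: sum_distrib_left)
    also have "\<dots> = 0"
    proof (rule sum.neutral, rule ballI)
      fix i assume "i \<in> {..degree L}"
      moreover have "card R \<ge> 1" using p0 Rfin by (metis One_nat_def Suc_leI card_gt_0_iff empty_iff)
      ultimately have "i + 2 \<le> k" using dL cR by simp
      thus "coeff L i * (\<Sum>p<m. g^(p*i) * d p) = 0" using code0 by simp
    qed
    finally have S0: "(\<Sum>p<m. poly L (g^p) * d p) = 0" .
    have "(\<Sum>p<m. poly L (g^p) * d p) = (\<Sum>p<m. if p = p0 then poly L (g^p0) * d p0 else 0)"
    proof (rule sum.cong[OF refl])
      fix p assume p: "p \<in> {..<m}"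
      show "poly L (g^p) * d p = (if p = p0 then poly L (g^p0) * d p0 else 0)"
      proof (cases "p = p0")
        case False
        show ?thesis
        proof (cases "p \<in> R")
          case True
          hence "poly L (g^p) = 0" using False Rfin unfolding L_def poly_prod
            by (intro prod_zero) auto
          thus ?thesis using False by simp
        next
          case nR: False thus ?thesis using False p by (auto simp: R_def)
        qed
      qed simp
    qed
    also have "\<dots> = poly L (g^p0) * d p0" using p0 by (simp add: R_def)
    finally have "poly L (g^p0) * d p0 = 0" using S0 by simp
    moreover have "d p0 \<noteq> 0" using p0 by (simp add: R_def)
    moreover have "poly L (g^p0) \<noteq> 0"
    proof -
      have "poly L (g^p0) = (\<Prod>p\<in>R-{p0}. g^p0 - g^p)" by (simp add: L_def poly_prod)
      also have "\<dots> \<noteq> 0"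
      proof -
        have "g^p0 - g^p \<noteq> 0" if "p \<in> R-{p0}" for p
          using inj[of p0 p] that p0 by (auto simp: R_def)
        thus ?thesis using Rfin by (simp add: prod_zero_iff)
      qed
      finally show ?thesis .
    qed
    ultimately show False by simp
  qed
  have Sd: "Ssub n k g c'' = {(\<lambda>j. \<Sum>t<k. a t * vgen n k g c'' t j) | a. True}" for c''
    by (simp add: Ssub_def lspan_map)
  have z: "zvec \<in> Ssub n k g c''" for c''
    unfolding Sd by (rule CollectI, rule exI[of _ "\<lambda>_. 0"]) (simp add: zvec_def)
  show ?thesis
  proof (rule set_eqI, rule iffI)
    fix x :: "nat \<Rightarrow> 'a" assume x: "x \<in> Ssub n k g c \<inter> Ssub n k g c'"
    from x have "x \<in> Ssub n k g c" by (rule IntD1)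
    then obtain a where xa: "x = (\<lambda>j. \<Sum>t<k. a t * vgen n k g c t j)"
      unfolding Sd by auto
    from x have "x \<in> Ssub n k g c'" by (rule IntD2)
    then obtain b where xb: "x = (\<lambda>j. \<Sum>t<k. b t * vgen n k g c' t j)"
      unfolding Sd by auto
    have "(\<lambda>j. \<Sum>t<k. a t * vgen n k g c t j) = (\<lambda>j. \<Sum>t<k. b t * vgen n k g c' t j)"
      using xa xb by simp
    hence "\<forall>t<k. a t = 0" by (rule key)
    thus "x \<in> {zvec}" using xa by (simp add: zvec_def)
  next
    fix x :: "nat \<Rightarrow> 'a" assume "x \<in> {zvec}" thus "x \<in> Ssub n k g c \<inter> Ssub n k g c'" using z by simp
  qed
qed

lemma Ssub_eq: "Ssub n k g c = {(\<lambda>j. \<Sum>t<k. a t * vgen n k g c t j) | a. True}"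
  by (simp add: Ssub_def lspan_map)

lemma count_reduce:
  "{T\<in>Ffam n k g. affine_translate u (Ssub n k g c) \<inter> T \<noteq> {}} \<subseteq>
    Ssub n k g ` {c'\<in>code n k g. \<exists>a b. \<forall>j. u j + (\<Sum>t<k. a t * vgen n k g c t j) = (\<Sum>t<k. b t * vgen n k g c' t j)}"
proof
  fix T assume "T \<in> {T\<in>Ffam n k g. affine_translate u (Ssub n k g c) \<inter> T \<noteq> {}}"
  then obtain c' x where c': "c' \<in> code n k g" "T = Ssub n k g c'" and x: "x \<in> affine_translate u (Ssub n k g c)" "x \<in> T"
    by (auto simp: Ffam_def)
  from x(1) obtain a where xa: "x = (\<lambda>j. u j + (\<Sum>t<k. a t * vgen n k g c t j))"
    by (auto simp: affine_translate_def Ssub_eq)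
  from x(2) c'(2) obtain b where xb: "x = (\<lambda>j. \<Sum>t<k. b t * vgen n k g c' t j)"
    by (auto simp: Ssub_eq)
  have "\<forall>j. u j + (\<Sum>t<k. a t * vgen n k g c t j) = (\<Sum>t<k. b t * vgen n k g c' t j)"
    using xa xb by metis
  thus "T \<in> Ssub n k g ` {c'\<in>code n k g. \<exists>a b. \<forall>j. u j + (\<Sum>t<k. a t * vgen n k g c t j) = (\<Sum>t<k. b t * vgen n k g c' t j)}"
    using c' by blast
qed

lemma count_k1:
  fixes g :: "'a::{finite,field}"
  assumes n: "n > 2" and c: "c \<in> code n 1 g" and u: "u \<notin> Ssub n 1 g c"
  shows "card {c'\<in>code n 1 g. \<exists>a b. \<forall>j. u j + (\<Sum>t<1. a t * vgen n 1 g c t j) = (\<Sum>t<1. b t * vgen n 1 g c' t j)} \<le> n - 1"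
proof -
  define m where "m = n - 2"
  define V where "V c' = vgen n 1 g c' 0" for c'
  define h where "h c' = (\<Sum>p<m. c' p ^ (p + 2))" for c' :: "nat \<Rightarrow> 'a"
  have V0: "V c' 0 = 1" for c' by (simp add: V_def vgen_def)
  have Vm: "V c' (Suc p) = c' p" if "p < m" for c' p
    using vgen_mid[of p n 1 g c' 0] that by (simp add: V_def m_def)
  have Vl: "V c' (n - 1) = h c'" for c'
    using vgen_last[of 1 n g c' 0] n by (simp add: V_def h_def m_def numeral_2_eq_2)
  define w where "w p = u (Suc p) - u 0 * c p" for p
  define z where "z = u (n - 1) - u 0 * h c"
  define f where "f s = (\<lambda>p. if p < m then c p + s * w p else 0)" for s
  define Roots where "Roots = {s. (\<Sum>p<m. 1*((c p + s*w p)^(p+2) - c p^(p+2)) + 0*((c p + s*w p)^(m+p+2) - c p^(m+p+2))) = z*s}"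
  let ?C = "{c'\<in>code n 1 g. \<exists>a b. \<forall>j. u j + (\<Sum>t<1. a t * vgen n 1 g c t j) = (\<Sum>t<1. b t * vgen n 1 g c' t j)}"
  have uS: "\<not> (\<forall>j. u j = lam * V c j)" for lam
  proof
    assume "\<forall>j. u j = lam * V c j"
    hence "u = (\<lambda>j. \<Sum>t<1. (\<lambda>_. lam) t * vgen n 1 g c t j)" by (auto simp: V_def)
    thus False using u by (auto simp: Ssub_eq)
  qed
  have sub: "?C \<subseteq> f ` Roots \<and> (?C \<noteq> {} \<longrightarrow> (\<exists>p0<m. w p0 \<noteq> 0))"
  proof -
    have "c' \<in> f ` Roots \<and> (\<exists>p0<m. w p0 \<noteq> 0)" if "c' \<in> ?C" for c'
    proof -
      from that obtain a b where c': "c' \<in> code n 1 g"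
        and eq: "\<And>j. u j + a * V c j = b * V c' j"
        by (auto simp: V_def)
      have e0: "u 0 + a = b" using eq[of 0] by (simp add: V0)
      have b0: "b \<noteq> 0"
      proof
        assume "b = 0"
        have "\<forall>j. u j = (- a) * V c j"
        proof
          fix j have "u j + a * V c j = 0" using eq[of j] \<open>b = 0\<close> by simp
          thus "u j = (- a) * V c j" by (simp add: eq_neg_iff_add_eq_0)
        qed
        thus False using uS by blast
      qed
      define s where "s = 1 / b"
      have cm: "c' p = c p + s * w p" if "p < m" for p
      proof -
        have ae: "a = b - u 0" using e0 by (simp add: algebra_simps)
        have "u (Suc p) + a * c p = b * c' p" using eq[of "Suc p"] that by (simp add: Vm)
        hence "b * c' p = b * c p + w p" by (simp add: ae w_def algebra_simps)
        hence "c' p = (b * c p + w p) / b" using b0 by (simp add: field_simps)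
        thus ?thesis using b0 by (simp add: s_def field_simps)
      qed
      have cvec: "c' p = 0" "c p = 0" if "p \<ge> m" for p
        using code_vecs[OF c'] code_vecs[OF c] that by (auto simp: vecs_def m_def)
      have fc: "c' = f s" unfolding f_def using cm cvec by auto
      have hl: "u (n - 1) + a * h c = b * h c'" using eq[of "n - 1"] by (simp only: Vl)
      have ae: "a = b - u 0" using e0 by (simp add: algebra_simps)
      have "b * h c' = b * h c + z" using hl by (simp add: ae z_def algebra_simps)
      hence "h c' = (b * h c + z) / b" using b0 by (simp add: field_simps)
      hence "h c' - h c = z * s" using b0 by (simp add: s_def field_simps)
      hence "s \<in> Roots" using fc
        by (simp add: Roots_def h_def f_def sum_subtractf[symmetric])
      moreover have "\<exists>p0<m. w p0 \<noteq> 0"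
      proof (rule ccontr)
        assume "\<not> (\<exists>p0<m. w p0 \<noteq> 0)"
        hence "c' p = c p" for p using cm[of p] cvec[of p] by (cases "p < m") auto
        hence "c' = c" by (rule ext)
        have "\<forall>j. u j = (b - a) * V c j"
        proof
          fix j have "u j + a * V c j = b * V c j" using eq[of j] \<open>c' = c\<close> by simp
          thus "u j = (b - a) * V c j" by (simp add: algebra_simps eq_diff_eq)
        qed
        thus False using uS by blast
      qed
      ultimately show ?thesis using fc by blast
    qed
    thus ?thesis by blast
  qed
  show ?thesis
  proof (cases "?C = {}")
    case True show ?thesis unfolding True by simp
  next
    case False
    then obtain p0 where p0: "p0 < m" "w p0 \<noteq> 0" using sub by blast
    have "card ?C \<le> card (f ` Roots)" using sub by (intro card_mono) auto
    also have "\<dots> \<le> card Roots" by (rule card_image_le) simp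
    also have "\<dots> \<le> m + 1" using root_bound[where E=w and \<rho>=1 and \<sigma>=0 and c=c and z=z and m=m, OF p0(1) p0(2)] by (simp add: Roots_def)
    finally show ?thesis using n by (simp add: m_def)
  qed
qed

lemma N_bound:
  fixes x w :: "nat \<Rightarrow> 'a::field"
  assumes inj: "\<And>p q. p < m \<Longrightarrow> q < m \<Longrightarrow> x p = x q \<Longrightarrow> p = q"
    and p0: "p0 < m" "w p0 \<noteq> 0"
  shows "card {r. (\<forall>p<m. r + x p \<noteq> 0) \<and> (\<Sum>p<m. w p / (r + x p)) = 0} \<le> m - 1"
proof -
  define N where "N = (\<Sum>p<m. smult (w p) (\<Prod>q\<in>{..<m}-{p}. [:x q, 1:]))"
  have pN: "poly N r = (\<Sum>p<m. w p * (\<Prod>q\<in>{..<m}-{p}. r + x q))" for r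
    by (simp add: N_def poly_sum poly_prod algebra_simps)
  have dN: "degree N \<le> m - 1" unfolding N_def
  proof (rule degree_sum_le)
    fix p assume "p \<in> {..<m}"
    have "degree (\<Prod>q\<in>{..<m}-{p}. [:x q, 1:]) \<le> sum (degree \<circ> (\<lambda>q. [:x q, 1:])) ({..<m}-{p})"
      by (rule degree_prod_sum_le) simp
    also have "\<dots> = card ({..<m}-{p})" by simp
    also have "\<dots> = m - 1" using \<open>p \<in> {..<m}\<close> by simp
    finally show "degree (smult (w p) (\<Prod>q\<in>{..<m}-{p}. [:x q, 1:])) \<le> m - 1"
      using degree_smult_le order_trans by blast
  qed simp
  have "poly N (- x p0) = (\<Sum>p<m. if p = p0 then w p0 * (\<Prod>q\<in>{..<m}-{p0}. - x p0 + x q) else 0)"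
    unfolding pN
  proof (rule sum.cong[OF refl])
    fix p assume p: "p \<in> {..<m}"
    show "w p * (\<Prod>q\<in>{..<m}-{p}. - x p0 + x q) = (if p = p0 then w p0 * (\<Prod>q\<in>{..<m}-{p0}. - x p0 + x q) else 0)"
    proof (cases "p = p0")
      case False
      have "(\<Prod>q\<in>{..<m}-{p}. - x p0 + x q) = 0"
        by (rule prod_zero) (use False p0 in auto)
      thus ?thesis using False by simp
    qed simp
  qed
  also have "\<dots> = w p0 * (\<Prod>q\<in>{..<m}-{p0}. - x p0 + x q)" using p0 by simp
  also have "\<dots> \<noteq> 0"
  proof -
    have "- x p0 + x q \<noteq> 0" if "q \<in> {..<m}-{p0}" for q
      using inj[of q p0] that p0 by (auto simp: add_eq_0_iff)
    thus ?thesis using p0 by (simp add: prod_zero_iff)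
  qed
  finally have N0: "N \<noteq> 0" by auto
  have "{r. (\<forall>p<m. r + x p \<noteq> 0) \<and> (\<Sum>p<m. w p / (r + x p)) = 0} \<subseteq> {r. poly N r = 0}"
  proof safe
    fix r assume nz: "\<forall>p<m. r + x p \<noteq> 0" and s0: "(\<Sum>p<m. w p / (r + x p)) = 0"
    have "poly N r = (\<Sum>p<m. w p / (r + x p) * (\<Prod>q<m. r + x q))"
      unfolding pN
    proof (rule sum.cong[OF refl])
      fix p assume p: "p \<in> {..<m}"
      have "(\<Prod>q<m. r + x q) = (r + x p) * (\<Prod>q\<in>{..<m}-{p}. r + x q)"
        using p by (simp add: prod.remove)
      thus "w p * (\<Prod>q\<in>{..<m}-{p}. r + x q) = w p / (r + x p) * (\<Prod>q<m. r + x q)"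
        using nz p by simp
    qed
    also have "\<dots> = 0" by (simp only: sum_distrib_right[symmetric] s0 mult_zero_left)
    finally show "poly N r = 0" .
  qed
  hence "card {r. (\<forall>p<m. r + x p \<noteq> 0) \<and> (\<Sum>p<m. w p / (r + x p)) = 0} \<le> card {r. poly N r = 0}"
    by (rule card_mono[OF poly_roots_finite[OF N0]])
  also have "\<dots> \<le> degree N" by (rule card_poly_roots_bound[OF N0])
  finally show ?thesis using dN by simp
qed

lemma sum_two: "(\<Sum>t<(2::nat). f t) = f 0 + f 1"
  by (simp add: numeral_2_eq_2)

lemma rs_eq:
  fixes c c' E :: "nat \<Rightarrow> 'a::field"
  assumes "\<And>p. p < m \<Longrightarrow> c' p = c p + t * E p"
  shows "(\<Sum>p<m. \<rho>*((c p + t*E p)^(p+2) - c p^(p+2)) + \<sigma>*((c p + t*E p)^(m+p+2) - c p^(m+p+2)))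
    = \<rho> * ((\<Sum>p<m. c' p ^ (p+2)) - (\<Sum>p<m. c p ^ (p+2))) + \<sigma> * ((\<Sum>p<m. c' p ^ (m+p+2)) - (\<Sum>p<m. c p ^ (m+p+2)))"
proof -
  have "(\<Sum>p<m. \<rho>*((c p + t*E p)^(p+2) - c p^(p+2)) + \<sigma>*((c p + t*E p)^(m+p+2) - c p^(m+p+2)))
      = (\<Sum>p<m. \<rho>*(c' p^(p+2) - c p^(p+2)) + \<sigma>*(c' p^(m+p+2) - c p^(m+p+2)))"
    using assms by (intro sum.cong) auto
  also have "\<dots> = \<rho> * ((\<Sum>p<m. c' p ^ (p+2)) - (\<Sum>p<m. c p ^ (p+2))) + \<sigma> * ((\<Sum>p<m. c' p ^ (m+p+2)) - (\<Sum>p<m. c p ^ (m+p+2)))"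
    by (simp only: sum.distrib sum_distrib_left[symmetric] sum_subtractf)
  finally show ?thesis .
qed

lemma count_k2:
  fixes g :: "'a::{finite,field}"
  assumes n: "n > 4" and q: "card (UNIV :: 'a set) \<ge> n * 2" and pr: "primitive_element g"
    and c: "c \<in> code n 2 g" and u: "u \<notin> Ssub n 2 g c"
  shows "card {c'\<in>code n 2 g. \<exists>a b. \<forall>j. u j + (\<Sum>t<2. a t * vgen n 2 g c t j) = (\<Sum>t<2. b t * vgen n 2 g c' t j)}
     \<le> 1 + 2 * (n - 2) * (2 * n - 6)"
proof -
  define m where "m = n - 3"
  define x where "x p = g^(p+1)" for p
  define V where "V t c' = vgen n 2 g c' t" for t c'
  define h0 where "h0 c' = (\<Sum>p<m. c' p ^ (p + 2))" for c' :: "nat \<Rightarrow> 'a"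
  define h1 where "h1 c' = (\<Sum>p<m. c' p ^ (m + p + 2))" for c' :: "nat \<Rightarrow> 'a"
  have V00: "V 0 c' 0 = 1" "V 1 c' 0 = 0" "V 0 c' 1 = 0" "V 1 c' 1 = 1" for c'
    by (simp_all add: V_def vgen_def)
  have Vm0: "V 0 c' (2 + p) = c' p" if "p < m" for c' p
    using vgen_mid[of p n 2 g c' 0] that by (simp add: V_def m_def)
  have Vm1: "V 1 c' (2 + p) = x p * c' p" if "p < m" for c' p
    using vgen_mid[of p n 2 g c' 1] that by (simp add: V_def m_def x_def)
  have Vl0: "V 0 c' (n - 1) = h0 c'" for c'
    using vgen_last[of 2 n g c' 0] n by (simp add: V_def h0_def m_def numeral_3_eq_3)
  have Vl1: "V 1 c' (n - 1) = h1 c'" for c'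
    using vgen_last[of 2 n g c' 1] n by (simp add: V_def h1_def m_def numeral_3_eq_3)
  have xinj: "p = p'" if "p < m" "p' < m" "x p = x p'" for p p'
  proof -
    have "p + 1 < card (UNIV :: 'a set) - 1" "p' + 1 < card (UNIV :: 'a set) - 1"
      using that q n unfolding m_def by linarith+
    thus ?thesis using prim_pow_inj[OF pr, of "p+1" "p'+1"] that by (simp add: x_def)
  qed
  have cvec: "c' p = 0" if "c' \<in> code n 2 g" "p \<ge> m" for c' p
    using code_vecs[OF that(1)] that(2) by (simp add: vecs_def m_def numeral_3_eq_3)
  have csum: "(\<Sum>p<m. c' p) = 0" if "c' \<in> code n 2 g" for c'
    using that by (simp add: code_def m_def numeral_3_eq_3)
  have uS: "\<not> (\<forall>j. u j = l0 * V 0 c j + l1 * V 1 c j)" for l0 l1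
  proof
    assume h: "\<forall>j. u j = l0 * V 0 c j + l1 * V 1 c j"
    have "u = (\<lambda>j. \<Sum>t<2. (\<lambda>t. if t = 0 then l0 else l1) t * vgen n 2 g c t j)"
      using h by (auto simp: sum_two V_def)
    thus False using u by (auto simp: Ssub_eq)
  qed
  define w where "w p = u (2 + p) - (u 0 + u 1 * x p) * c p" for p
  define z where "z = u (n - 1) - u 0 * h0 c - u 1 * h1 c"
  define F where "F E t = (\<lambda>p. if p < m then c p + t * E p else 0)" for E :: "nat \<Rightarrow> 'a" and t
  define RS where "RS \<rho> \<sigma> E = {t. (\<Sum>p<m. \<rho>*((c p + t*E p)^(p+2) - c p^(p+2)) + \<sigma>*((c p + t*E p)^(m+p+2) - c p^(m+p+2))) = z*t}"
    for \<rho> \<sigma> and E :: "nat \<Rightarrow> 'a"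
  define E where "E r p = (if r + x p = 0 then - (\<Sum>q<m. w q / (r + x q)) else w p / (r + x p))" for r p
  define A0 where "A0 = (if \<exists>p<m. w p \<noteq> 0 then F w ` RS 1 0 w else {})"
  define Rset where "Rset = {r. ((\<exists>p<m. r + x p = 0) \<or> ((\<forall>p<m. r + x p \<noteq> 0) \<and> (\<Sum>p<m. w p / (r + x p)) = 0))
                               \<and> (\<exists>p<m. E r p \<noteq> 0)}"
  let ?C = "{c'\<in>code n 2 g. \<exists>a b. \<forall>j. u j + (\<Sum>t<2. a t * vgen n 2 g c t j) = (\<Sum>t<2. b t * vgen n 2 g c' t j)}"
  have sub: "?C \<subseteq> A0 \<union> (\<Union>r\<in>Rset. F (E r) ` RS r 1 (E r))"
  proof
    fix c' assume "c' \<in> ?C"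
    then obtain a b where c': "c' \<in> code n 2 g"
      and eq0: "\<forall>j. u j + (\<Sum>t<2. a t * vgen n 2 g c t j) = (\<Sum>t<2. b t * vgen n 2 g c' t j)"
      by blast
    have eq: "u j + (a 0 * V 0 c j + a 1 * V 1 c j) = b 0 * V 0 c' j + b 1 * V 1 c' j" for j
      using eq0 unfolding sum_two V_def by blast
    have a0: "a 0 = b 0 - u 0" using eq[of 0] unfolding V00 by (simp add: algebra_simps)
    have a1: "a 1 = b 1 - u 1" using eq[of 1] unfolding V00 by (simp add: algebra_simps)
    define d where "d p = c' p - c p" for p
    have wd: "w p = (b 0 + b 1 * x p) * d p" if "p < m" for p
    proof -
      have "u (2+p) + (a 0 * c p + a 1 * (x p * c p)) = b 0 * c' p + b 1 * (x p * c' p)"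
        using eq[of "2+p"] that by (simp only: Vm0 Vm1)
      thus ?thesis unfolding a0 a1 by (simp add: w_def d_def algebra_simps)
    qed
    have zd: "z = b 0 * (h0 c' - h0 c) + b 1 * (h1 c' - h1 c)"
    proof -
      have "u (n-1) + (a 0 * h0 c + a 1 * h1 c) = b 0 * h0 c' + b 1 * h1 c'"
        using eq[of "n-1"] by (simp only: Vl0 Vl1)
      thus ?thesis unfolding a0 a1 by (simp add: z_def algebra_simps)
    qed
    have bnz: "b 0 \<noteq> 0 \<or> b 1 \<noteq> 0"
    proof (rule ccontr)
      assume "\<not> (b 0 \<noteq> 0 \<or> b 1 \<noteq> 0)"
      hence "\<forall>j. u j = (- a 0) * V 0 c j + (- a 1) * V 1 c j"
        using eq by (simp add: eq_neg_iff_add_eq_0 algebra_simps)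
      thus False using uS by blast
    qed
    have dsum: "(\<Sum>p<m. d p) = 0" using csum[OF c] csum[OF c'] by (simp add: d_def sum_subtractf)
    have dnz: "\<exists>p<m. d p \<noteq> 0"
    proof (rule ccontr)
      assume "\<not> (\<exists>p<m. d p \<noteq> 0)"
      hence "c' p = c p" for p using cvec[OF c, of p] cvec[OF c', of p] by (cases "p < m") (auto simp: d_def)
      hence "c' = c" by (rule ext)
      hence "\<forall>j. u j = (b 0 - a 0) * V 0 c j + (b 1 - a 1) * V 1 c j"
        using eq by (simp add: algebra_simps eq_diff_eq)
      thus False using uS by blast
    qed
    have Fc: "c' = F D t" if "\<And>p. p < m \<Longrightarrow> d p = t * D p" for D t
    proof
      fix p show "c' p = F D t p"
        using that[of p] cvec[OF c, of p] cvec[OF c', of p] by (cases "p < m") (auto simp: F_def d_def algebra_simps)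
    qed
    have inRS: "t \<in> RS \<rho> \<sigma> D" if "\<And>p. p < m \<Longrightarrow> d p = t * D p" "z * t = \<rho> * (h0 c' - h0 c) + \<sigma> * (h1 c' - h1 c)" for D t \<rho> \<sigma>
    proof -
      have "\<And>p. p < m \<Longrightarrow> c' p = c p + t * D p" using that(1) by (simp add: d_def algebra_simps)
      from rs_eq[of m c' c t D \<rho> \<sigma>, OF this] that(2) show ?thesis
        by (simp add: RS_def h0_def h1_def)
    qed
    show "c' \<in> A0 \<union> (\<Union>r\<in>Rset. F (E r) ` RS r 1 (E r))"
    proof (cases "b 1 = 0")
      case True
      hence b0: "b 0 \<noteq> 0" using bnz by simp
      define t where "t = 1 / b 0"
      have dt: "d p = t * w p" if "p < m" for p using wd[OF that] True b0 by (simp add: t_def)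
      have "z * t = 1 * (h0 c' - h0 c) + 0 * (h1 c' - h1 c)" using zd True b0 by (simp add: t_def)
      hence "t \<in> RS 1 0 w" using inRS[OF dt] by blast
      moreover have "\<exists>p<m. w p \<noteq> 0" using dnz dt by force
      ultimately have "c' \<in> A0" using Fc[OF dt] by (simp add: A0_def)
      thus ?thesis by blast
    next
      case False
      define t where "t = 1 / b 1"
      define r where "r = b 0 * t"
      have t0: "t \<noteq> 0" using False by (simp add: t_def)
      have rd: "(r + x p) * d p = t * w p" if "p < m" for p
        using wd[OF that] False by (simp add: r_def t_def field_simps)
      have dE: "d p = t * E r p" if "p < m" for p
      proof (cases "r + x p = 0")
        case False thus ?thesis using rd[OF that] by (simp add: E_def field_simps)
      next
        case True
        have oth: "r + x q \<noteq> 0" if "q < m" "q \<noteq> p" for q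
          using xinj[of q p] that \<open>p < m\<close> True by (metis add_left_cancel)
        have "0 = (\<Sum>q<m. d q)" using dsum by simp
        also have "\<dots> = d p + (\<Sum>q\<in>{..<m}-{p}. d q)" using that by (simp add: sum.remove)
        also have "(\<Sum>q\<in>{..<m}-{p}. d q) = (\<Sum>q\<in>{..<m}-{p}. t * (w q / (r + x q)))"
        proof (rule sum.cong[OF refl])
          fix q assume "q \<in> {..<m}-{p}"
          hence "q < m" "r + x q \<noteq> 0" using oth by auto
          thus "d q = t * (w q / (r + x q))" using rd[of q] by (simp add: field_simps)
        qed
        also have "\<dots> = t * (\<Sum>q<m. w q / (r + x q))"
        proof -
          have "(\<Sum>q<m. w q / (r + x q)) = w p / (r + x p) + (\<Sum>q\<in>{..<m}-{p}. w q / (r + x q))"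
            using that by (simp add: sum.remove)
          thus ?thesis using True by (simp add: sum_distrib_left)
        qed
        finally show ?thesis using True by (simp add: E_def eq_neg_iff_add_eq_0 algebra_simps)
      qed
      have "z * t = r * (h0 c' - h0 c) + 1 * (h1 c' - h1 c)"
        using zd False by (simp add: r_def t_def field_simps)
      hence tRS: "t \<in> RS r 1 (E r)" using inRS[OF dE] by blast
      have rR: "r \<in> Rset"
      proof -
        have "\<exists>p<m. E r p \<noteq> 0" using dnz dE by force
        moreover have "(\<exists>p<m. r + x p = 0) \<or> ((\<forall>p<m. r + x p \<noteq> 0) \<and> (\<Sum>p<m. w p / (r + x p)) = 0)"
        proof (cases "\<exists>p<m. r + x p = 0")
          case False
          hence "d p = t * (w p / (r + x p))" if "p < m" for p using rd[OF that] that by (simp add: field_simps)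
          hence "(\<Sum>p<m. d p) = t * (\<Sum>p<m. w p / (r + x p))" by (simp add: sum_distrib_left)
          thus ?thesis using dsum t0 False by simp
        qed simp
        ultimately show ?thesis by (simp add: Rset_def)
      qed
      show ?thesis using Fc[OF dE] tRS rR by blast
    qed
  qed
  have fin: "finite (A0 \<union> (\<Union>r\<in>Rset. F (E r) ` RS r 1 (E r)))"
    by (simp add: A0_def)
  have cA0: "card A0 \<le> m + 1"
  proof (cases "\<exists>p<m. w p \<noteq> 0")
    case True
    then obtain p0 where p0: "p0 < m" "w p0 \<noteq> 0" by blast
    have "card A0 \<le> card (RS 1 0 w)" using True by (simp add: A0_def card_image_le)
    also have "\<dots> \<le> m + 1"
      using root_bound[where E=w and \<rho>=1 and \<sigma>=0 and c=c and z=z and m=m, OF p0(1) p0(2)]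
      by (simp add: RS_def)
    finally show ?thesis .
  qed (auto simp: A0_def)
  have cRS: "card (F (E r) ` RS r 1 (E r)) \<le> 2 * m + 1" if "r \<in> Rset" for r
  proof -
    have "\<exists>p<m. E r p \<noteq> 0" using that unfolding Rset_def by blast
    then obtain p0 where p0: "p0 < m" "E r p0 \<noteq> 0" by blast
    have "card (F (E r) ` RS r 1 (E r)) \<le> card (RS r 1 (E r))" by (simp add: card_image_le)
    also have "\<dots> \<le> 2 * m + 1"
      using root_bound[where E="E r" and \<rho>=r and \<sigma>=1 and c=c and z=z and m=m, OF p0(1) p0(2)]
      by (simp add: RS_def)
    finally show ?thesis .
  qed
  have cR: "card Rset \<le> 2 * m"
  proof -
    define X where "X = (\<lambda>p. - x p) ` {..<m}"
    define Y where "Y = {r. (\<forall>p<m. r + x p \<noteq> 0) \<and> (\<Sum>p<m. w p / (r + x p)) = 0 \<and> (\<exists>p<m. w p \<noteq> 0)}"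
    have "Rset \<subseteq> X \<union> Y"
    proof
      fix r assume r: "r \<in> Rset"
      show "r \<in> X \<union> Y"
      proof (cases "\<exists>p<m. r + x p = 0")
        case True
        then obtain p where "p < m" "r = - x p" by (auto simp: eq_neg_iff_add_eq_0)
        thus ?thesis by (auto simp: X_def)
      next
        case False
        then have "\<exists>p<m. w p \<noteq> 0" using r by (auto simp: Rset_def E_def)
        thus ?thesis using r False by (auto simp: Rset_def Y_def)
      qed
    qed
    hence "card Rset \<le> card (X \<union> Y)" by (intro card_mono) auto
    also have "\<dots> \<le> card X + card Y" by (rule card_Un_le)
    also have "card X \<le> m" unfolding X_def using card_image_le[of "{..<m}" "\<lambda>p. - x p"] by simp
    also have "card Y \<le> m"
    proof (cases "\<exists>p<m. w p \<noteq> 0")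
      case True
      then obtain p0 where p0: "p0 < m" "w p0 \<noteq> 0" by blast
      have "Y \<subseteq> {r. (\<forall>p<m. r + x p \<noteq> 0) \<and> (\<Sum>p<m. w p / (r + x p)) = 0}" by (auto simp: Y_def)
      hence "card Y \<le> card {r. (\<forall>p<m. r + x p \<noteq> 0) \<and> (\<Sum>p<m. w p / (r + x p)) = 0}"
        by (intro card_mono) auto
      also have "\<dots> \<le> m - 1" by (rule N_bound[of m x p0 w]) (use xinj p0 in auto)
      finally show ?thesis by simp
    next
      case False
      hence "Y = {}" by (auto simp: Y_def)
      thus ?thesis by simp
    qed
    finally show ?thesis by simp
  qed
  have "card ?C \<le> card (A0 \<union> (\<Union>r\<in>Rset. F (E r) ` RS r 1 (E r)))" by (rule card_mono[OF fin sub])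
  also have "\<dots> \<le> card A0 + card (\<Union>r\<in>Rset. F (E r) ` RS r 1 (E r))" by (rule card_Un_le)
  also have "card (\<Union>r\<in>Rset. F (E r) ` RS r 1 (E r)) \<le> (\<Sum>r\<in>Rset. card (F (E r) ` RS r 1 (E r)))"
    by (rule card_UN_le) simp
  also have "\<dots> \<le> (\<Sum>r\<in>Rset. 2 * m + 1)" by (rule sum_mono) (rule cRS)
  also have "\<dots> = card Rset * (2 * m + 1)" by simp
  also have "\<dots> \<le> 2 * m * (2 * m + 1)" using cR by (rule mult_right_mono) simp
  finally have "card ?C \<le> m + 1 + 2 * m * (2 * m + 1)" using cA0 by linarith
  moreover have "1 + 2 * (n - 2) * (2 * n - 6) = 1 + 2 * (m + 1) * (2 * m)"
  proof -
    have "n = m + 3" using n by (simp add: m_def)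
    thus ?thesis by simp
  qed
  moreover have "m + 1 + 2 * m * (2 * m + 1) \<le> 1 + 2 * (m + 1) * (2 * m)" by (simp add: algebra_simps)
  ultimately show ?thesis by linarith
qed

lemma finite_vecs: "finite (vecs m :: (nat \<Rightarrow> 'a::{finite,zero}) set)"
proof -
  have "vecs m \<subseteq> (\<lambda>xs j. if j < m then xs ! j else 0) ` {xs :: 'a list. set xs \<subseteq> UNIV \<and> length xs = m}"
  proof
    fix v :: "nat \<Rightarrow> 'a" assume v: "v \<in> vecs m"
    have "v = (\<lambda>j. if j < m then map v [0..<m] ! j else 0)"
      using v by (auto simp: vecs_def)
    thus "v \<in> (\<lambda>xs j. if j < m then xs ! j else 0) ` {xs. set xs \<subseteq> UNIV \<and> length xs = m}"
      by (intro image_eqI[where x="map v [0..<m]"]) auto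
  qed
  moreover have "finite {xs :: 'a list. set xs \<subseteq> UNIV \<and> length xs = m}"
    by (rule finite_lists_length_eq) simp
  ultimately show ?thesis by (meson finite_imageI finite_subset)
qed

lemma finite_code: "finite (code n k g :: (nat \<Rightarrow> 'a::{finite,field}) set)"
  by (rule finite_subset[OF _ finite_vecs[of "n - k - 1"]]) (auto simp: code_def)

lemma AAD_gen:
  fixes g :: "'a::{finite,field}"
  assumes nk: "n > 2 * k" and q: "card (UNIV :: 'a set) \<ge> n * k" and pr: "primitive_element g"
    and cnt: "\<And>c u. c \<in> code n k g \<Longrightarrow> u \<in> vecs n \<Longrightarrow> u \<notin> Ssub n k g c \<Longrightarrow>
      card {c'\<in>code n k g. \<exists>a b. \<forall>j. u j + (\<Sum>t<k. a t * vgen n k g c t j) = (\<Sum>t<k. b t * vgen n k g c' t j)} \<le> L"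
  shows "AAD n k L (Ffam n k g)"
  unfolding AAD_def
proof (intro conjI ballI)
  show "n > 2 * k" by (rule nk)
next
  fix S assume "S \<in> Ffam n k g"
  then obtain c where "S = Ssub n k g c" by (auto simp: Ffam_def)
  thus "kdim_subspace n k S" using kdim[OF nk] by simp
next
  fix S T assume "S \<in> Ffam n k g" "T \<in> Ffam n k g"
  then obtain c c' where c: "c \<in> code n k g" "S = Ssub n k g c" and c': "c' \<in> code n k g" "T = Ssub n k g c'"
    by (auto simp: Ffam_def)
  show "S \<noteq> T \<longrightarrow> S \<inter> T = {zvec}"
  proof
    assume "S \<noteq> T"
    hence "c \<noteq> c'" using c c' by auto
    thus "S \<inter> T = {zvec}" using trivial_int[OF nk q pr c(1) c'(1)] c c' by simp
  qed
next
  fix S u assume S: "S \<in> Ffam n k g" and u: "u \<in> vecs n - S"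
  then obtain c where c: "c \<in> code n k g" "S = Ssub n k g c" by (auto simp: Ffam_def)
  let ?C = "{c'\<in>code n k g. \<exists>a b. \<forall>j. u j + (\<Sum>t<k. a t * vgen n k g c t j) = (\<Sum>t<k. b t * vgen n k g c' t j)}"
  have "card {T\<in>Ffam n k g. affine_translate u S \<inter> T \<noteq> {}} \<le> card (Ssub n k g ` ?C)"
    using count_reduce[of n k g u c] c finite_code[of n k g] by (intro card_mono) auto
  also have "\<dots> \<le> card ?C" by (rule card_image_le) (rule finite_subset[OF _ finite_code[of n k g]], auto)
  also have "\<dots> \<le> L" using cnt[OF c(1)] u c(2) by simp
  finally show "card {T\<in>Ffam n k g. affine_translate u S \<inter> T \<noteq> {}} \<le> L" .
qed

theorem mainTheorem10:
  fixes n k :: nat and g :: "'a::{finite,field}"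
  assumes "n > 2 * k"
    and "card (UNIV :: 'a set) \<ge> n * k"
    and "primitive_element g"
  shows "(\<forall>c\<in>code n k g. kdim_subspace n k (Ssub n k g c))
       \<and> (\<forall>c\<in>code n k g. \<forall>c'\<in>code n k g. c \<noteq> c' \<longrightarrow> Ssub n k g c \<inter> Ssub n k g c' = {zvec})
       \<and> (k = 1 \<longrightarrow> AAD n 1 (n - 1) (Ffam n 1 g))
       \<and> (k = 2 \<longrightarrow> AAD n 2 (1 + 2 * (n - 2) * (2 * n - 6)) (Ffam n 2 g))"
proof (intro conjI ballI impI)
  fix c assume "c \<in> code n k g"
  show "kdim_subspace n k (Ssub n k g c)" by (rule kdim[OF assms(1)])
next
  fix c c' assume "c \<in> code n k g" "c' \<in> code n k g" "c \<noteq> c'"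
  thus "Ssub n k g c \<inter> Ssub n k g c' = {zvec}" by (rule trivial_int[OF assms])
next
  assume k: "k = 1"
  show "AAD n 1 (n - 1) (Ffam n 1 g)"
  proof (rule AAD_gen)
    show "n > 2 * 1" using assms k by simp
    show "card (UNIV :: 'a set) \<ge> n * 1" using assms k by simp
    show "primitive_element g" by (rule assms(3))
    fix c u assume "c \<in> code n 1 g" "u \<in> vecs n" "u \<notin> Ssub n 1 g c"
    thus "card {c'\<in>code n 1 g. \<exists>a b. \<forall>j. u j + (\<Sum>t<1. a t * vgen n 1 g c t j) = (\<Sum>t<1. b t * vgen n 1 g c' t j)} \<le> n - 1"
      using count_k1[of n c g u] assms k by simp
  qed
next
  assume k: "k = 2"
  show "AAD n 2 (1 + 2 * (n - 2) * (2 * n - 6)) (Ffam n 2 g)"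
  proof (rule AAD_gen)
    show "n > 2 * 2" using assms k by simp
    show "card (UNIV :: 'a set) \<ge> n * 2" using assms k by simp
    show "primitive_element g" by (rule assms(3))
    fix c u assume "c \<in> code n 2 g" "u \<in> vecs n" "u \<notin> Ssub n 2 g c"
    thus "card {c'\<in>code n 2 g. \<exists>a b. \<forall>j. u j + (\<Sum>t<2. a t * vgen n 2 g c t j) = (\<Sum>t<2. b t * vgen n 2 g c' t j)}
        \<le> 1 + 2 * (n - 2) * (2 * n - 6)"
      using count_k2[of n g c u] assms k by simp
  qed
qed

end
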